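(* Let $m\in\mathrm{Hol}(\mathbb{D})$ with $m(0)\neq0$, $\beta\in\mathbb{T}$, and $n\in\mathbb{N}$ such that $\beta^k\neq1$ for $k=1,\dots,n$. Let $T:\mathrm{Hol}(\mathbb{D})\to\mathrm{Hol}(\mathbb{D})$ be given by $(Tf)(z)=m(z)f(\beta z)$. Then for each $k=1,\dots,n$, there is no $f\in\mathrm{Hol}(\mathbb{D})$ with $\beta^km(0)f-Tf=e_k$; that is, $e_k\notin(\beta^km(0)\mathrm{Id}-T)\mathrm{Hol}(\mathbb{D})$.
   Context: $\mathbb{D}$ is the open unit disc, $\mathbb{T}$ the unit circle, $\mathrm{Hol}(\mathbb{D})$ the space of holomorphic functions on $\mathbb{D}$, and $e_k(z)=z^k$ for $k\in\mathbb{N}_0$. *)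

theory Defs
  imports "HOL-Analysis.Analysis"
begin

end

theory Submission
  imports Defs "HOL-Complex_Analysis.Complex_Analysis"
begin

lemma limit_eq_at0:
  fixes g p :: "complex \<Rightarrow> complex"
  assumes g: "continuous_on (ball 0 1) g" and p: "continuous (at 0) p"
    and eq: "\<And>z. z \<in> ball 0 1 \<Longrightarrow> z \<noteq> 0 \<Longrightarrow> g z = p z"
  shows "g 0 = p 0"
proof -
  have "(g \<longlongrightarrow> g 0) (at 0)"
    using g by (metis centre_in_ball continuous_on_eq_continuous_at isCont_def open_ball zero_less_one)
  moreover have "(p \<longlongrightarrow> p 0) (at 0)" using p by (simp add: isCont_def)
  moreover have "eventually (\<lambda>z. g z = p z) (at 0)"
  proof -
    have "eventually (\<lambda>z. z \<in> ball 0 1) (at (0::complex))"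
      unfolding eventually_at_topological
      by (rule exI[of _ "ball 0 1"]) auto
    then show ?thesis
      by (smt (verit, ccfv_threshold) eq eventually_at_filter eventually_elim2)
  qed
  ultimately have "(p \<longlongrightarrow> g 0) (at 0)" by (metis (mono_tags) tendsto_cong)
  then show ?thesis using \<open>(p \<longlongrightarrow> p 0) (at 0)\<close>
    using tendsto_unique[OF trivial_limit_at] by blast
qed

lemma ball_mult:
  fixes \<beta> z :: complex
  assumes "norm \<beta> = 1" "z \<in> ball 0 1" shows "\<beta> * z \<in> ball 0 1"
  using assms by (simp add: norm_mult)

theorem lemma2p5:
  fixes m :: "complex \<Rightarrow> complex" and \<beta> :: complex and n :: nat
  assumes "m holomorphic_on ball 0 1"
    and "m 0 \<noteq> 0"
    and "norm \<beta> = 1"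
    and "\<And>k. k \<in> {1..n} \<Longrightarrow> \<beta> ^ k \<noteq> 1"
  shows "\<forall>k \<in> {1..n}. \<not> (\<exists>f. f holomorphic_on ball 0 1 \<and>
           (\<forall>z \<in> ball 0 1. \<beta> ^ k * m 0 * f z - m z * f (\<beta> * z) = z ^ k))"
proof (intro ballI notI)
  fix k assume k: "k \<in> {1..n}"
  assume "\<exists>f. f holomorphic_on ball 0 1 \<and>
           (\<forall>z \<in> ball 0 1. \<beta> ^ k * m 0 * f z - m z * f (\<beta> * z) = z ^ k)"
  then obtain f where fh: "f holomorphic_on ball 0 1"
    and fe: "\<And>z. z \<in> ball 0 1 \<Longrightarrow> \<beta> ^ k * m 0 * f z - m z * f (\<beta> * z) = z ^ k" by blast
  have b0: "\<beta> \<noteq> 0" using assms(3) by auto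
  have mc: "continuous_on (ball 0 1) m" using assms(1) holomorphic_on_imp_continuous_on by blast
  have mc0: "continuous (at 0) m"
    using mc by (metis centre_in_ball continuous_on_eq_continuous_at open_ball zero_less_one)
  have comp: "continuous_on (ball 0 1) (\<lambda>z. h (\<beta> * z))" if "continuous_on (ball 0 1) h" for h
  proof -
    have "continuous_on (ball 0 1) (\<lambda>z. \<beta> * z)" by (intro continuous_intros)
    moreover have "(\<lambda>z. \<beta> * z) ` ball 0 1 \<subseteq> ball 0 1" using ball_mult assms(3) by auto
    ultimately show ?thesis using continuous_on_compose2 that by blast
  qed
  have fact: "\<exists>h. h holomorphic_on ball 0 1 \<and> (\<forall>z\<in>ball 0 1. f z = z ^ j * h z)" if "j \<le> k" for j
    using that
  proof (induction j)
    case 0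
    then show ?case using fh by auto
  next
    case (Suc j)
    then obtain h where hh: "h holomorphic_on ball 0 1" and hf: "\<forall>z\<in>ball 0 1. f z = z ^ j * h z"
      by auto
    have jk: "j < k" using Suc by auto
    have hc: "continuous_on (ball 0 1) h" using hh holomorphic_on_imp_continuous_on by blast
    have eq: "\<beta> ^ k * m 0 * h z - m z * \<beta> ^ j * h (\<beta> * z) = z ^ (k - j)"
      if z: "z \<in> ball 0 1" "z \<noteq> 0" for z
    proof -
      have "z ^ j * (\<beta> ^ k * m 0 * h z - m z * \<beta> ^ j * h (\<beta> * z)) = z ^ j * z ^ (k - j)"
        using fe[OF z(1)] hf z ball_mult[OF assms(3) z(1)] jk
        by (simp add: power_mult_distrib algebra_simps flip: power_add)
      then show ?thesis using z(2) by simp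
    qed
    have "\<beta> ^ k * m 0 * h 0 - m 0 * \<beta> ^ j * h (\<beta> * 0) = 0 ^ (k - j)"
      by (rule limit_eq_at0[where g = "\<lambda>z. \<beta> ^ k * m 0 * h z - m z * \<beta> ^ j * h (\<beta> * z)"])
         (use eq comp[OF hc] hc mc in \<open>auto intro!: continuous_intros\<close>)
    then have "(\<beta> ^ k - \<beta> ^ j) * m 0 * h 0 = 0" using jk by (simp add: algebra_simps)
    moreover have "\<beta> ^ k \<noteq> \<beta> ^ j"
    proof
      assume "\<beta> ^ k = \<beta> ^ j"
      then have "\<beta> ^ j * \<beta> ^ (k - j) = \<beta> ^ j * 1" using jk by (simp flip: power_add)
      then have "\<beta> ^ (k - j) = 1" using b0 by simp
      moreover have "k - j \<in> {1..n}" using k jk by auto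
      ultimately show False using assms(4) by blast
    qed
    ultimately have h0: "h 0 = 0" using assms(2) by simp
    define h2 where "h2 = (\<lambda>z. if z = 0 then deriv h 0 else (h z - h 0) / (z - 0))"
    have "h2 holomorphic_on ball 0 1" unfolding h2_def by (rule pole_lemma_open[OF hh]) auto
    moreover have "\<forall>z\<in>ball 0 1. f z = z ^ Suc j * h2 z"
      using hf h0 by (auto simp: h2_def)
    ultimately show ?case by blast
  qed
  then obtain h where hh: "h holomorphic_on ball 0 1" and hf: "\<forall>z\<in>ball 0 1. f z = z ^ k * h z"
    by auto
  have hc: "continuous_on (ball 0 1) h" using hh holomorphic_on_imp_continuous_on by blast
  have eq: "\<beta> ^ k * m 0 * h z - m z * \<beta> ^ k * h (\<beta> * z) = 1"
    if z: "z \<in> ball 0 1" "z \<noteq> 0" for z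
  proof -
    have "z ^ k * (\<beta> ^ k * m 0 * h z - m z * \<beta> ^ k * h (\<beta> * z)) = z ^ k * 1"
      using fe[OF z(1)] hf z ball_mult[OF assms(3) z(1)]
      by (simp add: power_mult_distrib algebra_simps)
    then show ?thesis using z(2) by simp
  qed
  have "\<beta> ^ k * m 0 * h 0 - m 0 * \<beta> ^ k * h (\<beta> * 0) = (\<lambda>_. 1) 0"
    by (rule limit_eq_at0[where g = "\<lambda>z. \<beta> ^ k * m 0 * h z - m z * \<beta> ^ k * h (\<beta> * z)"])
       (use eq comp[OF hc] hc mc in \<open>auto intro!: continuous_intros\<close>)
  then show False by simp
qed

end
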